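(* For each $y$ in the peak-insertion set of an avoider $p$ on $[n]$, there is exactly one position $i$ such that $q:=p\oplus_{i}y$ satisfies (i) $q$ is an avoider, (ii) the peak blue entry of $q$ is $y$, and (iii) $q$ has exactly one more blue entry than $p$. Also, for $y$ not in the peak-insertion set of $p$, there is no such $i$.
   Context: Permutations are standard permutations written in one-line form. A permutation on $[n]$ is indecomposable if there is no $k$ with $1\le k<n$ such that its first $k$ entries are exactly $\{1,\dots,k\}$ (the empty permutation is not indecomposable). An "avoider" means an indecomposable permutation avoiding both patterns $3241$ and $4321$. A blue (key-2) entry is an entry that serves as the "2" in a $321$ pattern or in a $4312$ pattern. For a $321$-containing avoider, let $a$ be the last (rightmost) entry serving as the "1" of a $321$ pattern; the peak blue entry is the larger of $a$ and its immediate predecessor. Inserting $y$ at position $i$ into $p$, written $p\oplus_i y$, means incrementing by $1$ each entry $\ge y$ and then placing $y$ in position $i$ (e.g. $3142\oplus_4 2=41523$). LRMax means left-to-right maximum. To a $321$-containing permutation $p$ on $[n]$ associate the triple $(a,b,c)$: $a$ is the last "1" of a $321$ in $p$, $b$ is the rightmost entry to the left of $a$ that exceeds $a$, and $c$ is the first non-LRMax entry after $a$ ($c=\infty$ if there is none). Its peak-insertion set is $[a+1,b+1]\cup[c+1,n]$, where $[c+1,n]=\emptyset$ if $c=\infty$. For a $321$-avoiding permutation on $[n]$, set $c=1$ and define its peak-insertion set to be $[2,n]$. *)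

theory Defs
  imports Main
begin

text \<open>Permutations in one-line form are lists of naturals; a permutation on [n]
  is a list of length n whose entries are exactly 1..n.  Positions are 0-indexed
  internally.\<close>

definition is_perm :: "nat list \<Rightarrow> bool" where
  "is_perm p \<longleftrightarrow> distinct p \<and> set p = {1..length p}"

definition indecomposable :: "nat list \<Rightarrow> bool" where
  "indecomposable p \<longleftrightarrow> is_perm p \<and> length p \<ge> 1 \<and>
     \<not> (\<exists>k. 1 \<le> k \<and> k < length p \<and> set (take k p) = {1..k})"

definition occ :: "nat list \<Rightarrow> nat list \<Rightarrow> nat list \<Rightarrow> bool" where
  "occ p s idx \<longleftrightarrow> length idx = length s \<and> sorted_wrt (<) idx \<and>
     (\<forall>j \<in> set idx. j < length p) \<and>
     (\<forall>u < length s. \<forall>v < length s. p ! (idx ! u) < p ! (idx ! v) \<longleftrightarrow> s ! u < s ! v)"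

definition contains :: "nat list \<Rightarrow> nat list \<Rightarrow> bool" where
  "contains p s \<longleftrightarrow> (\<exists>idx. occ p s idx)"

definition avoider :: "nat list \<Rightarrow> bool" where
  "avoider p \<longleftrightarrow> indecomposable p \<and> \<not> contains p [3,2,4,1] \<and> \<not> contains p [4,3,2,1]"

definition blue_pos :: "nat list \<Rightarrow> nat \<Rightarrow> bool" where
  "blue_pos p j \<longleftrightarrow> (\<exists>idx. occ p [3,2,1] idx \<and> idx ! 1 = j) \<or>
                    (\<exists>idx. occ p [4,3,1,2] idx \<and> idx ! 3 = j)"

definition num_blue :: "nat list \<Rightarrow> nat" where
  "num_blue p = card {j. j < length p \<and> blue_pos p j}"

definition one321_pos :: "nat list \<Rightarrow> nat \<Rightarrow> bool" where
  "one321_pos p j \<longleftrightarrow> (\<exists>idx. occ p [3,2,1] idx \<and> idx ! 2 = j)"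

text \<open>Position of the last "1" of a 321 (meaningful when p contains 321).\<close>
definition last1_pos :: "nat list \<Rightarrow> nat" where
  "last1_pos p = Max {j. j < length p \<and> one321_pos p j}"

definition peak_blue :: "nat list \<Rightarrow> nat" where
  "peak_blue p = max (p ! last1_pos p) (p ! (last1_pos p - 1))"

definition trip_a :: "nat list \<Rightarrow> nat" where
  "trip_a p = p ! last1_pos p"

definition trip_b :: "nat list \<Rightarrow> nat" where
  "trip_b p = p ! (Max {k. k < last1_pos p \<and> p ! k > trip_a p})"

definition non_lrmax_pos :: "nat list \<Rightarrow> nat \<Rightarrow> bool" where
  "non_lrmax_pos p k \<longleftrightarrow> (\<exists>k' < k. p ! k' > p ! k)"

text \<open>c as an option: None encodes c = infinity.\<close>
definition trip_c :: "nat list \<Rightarrow> nat option" where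
  "trip_c p = (if \<exists>k. last1_pos p < k \<and> k < length p \<and> non_lrmax_pos p k
     then Some (p ! (LEAST k. last1_pos p < k \<and> k < length p \<and> non_lrmax_pos p k))
     else None)"

definition peak_set :: "nat list \<Rightarrow> nat set" where
  "peak_set p = (if contains p [3,2,1]
     then {trip_a p + 1 .. trip_b p + 1} \<union>
          (case trip_c p of None \<Rightarrow> {} | Some c \<Rightarrow> {c + 1 .. length p})
     else {2 .. length p})"

text \<open>Insertion p \<oplus>_i y, with i a 1-indexed position (y becomes the i-th entry).\<close>
definition ins :: "nat list \<Rightarrow> nat \<Rightarrow> nat \<Rightarrow> nat list" where
  "ins p i y = (let p' = map (\<lambda>x. if x \<ge> y then x + 1 else x) p
                in take (i - 1) p' @ y # drop (i - 1) p')"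

lemma ins_example: "ins [3,1,4,2] 4 2 = [4,1,5,2,3]"
  by (simp add: ins_def)

end

theory Submission
  imports Defs
begin


lemma allS: "(\<forall>u<Suc n. P u) \<longleftrightarrow> P 0 \<and> (\<forall>u<n. P (Suc u))"
  by (metis less_Suc_eq_0_disj)

lemmas occ_simps = occ_def numeral_eq_Suc allS length_Suc_conv

lemma occ321: "occ p [3,2,1] idx \<longleftrightarrow> (\<exists>i j k. idx = [i,j,k] \<and> i<j \<and> j<k \<and> k<length p \<and> p!j < p!i \<and> p!k < p!j)"
  by (auto simp: occ_simps)

lemma occ4321: "occ p [4,3,2,1] idx \<longleftrightarrow> (\<exists>i j k m. idx = [i,j,k,m] \<and> i<j \<and> j<k \<and> k<m \<and> m<length p \<and> p!j < p!i \<and> p!k < p!j \<and> p!m < p!k)"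
  by (auto simp: occ_simps)

lemma occ3241: "occ p [3,2,4,1] idx \<longleftrightarrow> (\<exists>i j k m. idx = [i,j,k,m] \<and> i<j \<and> j<k \<and> k<m \<and> m<length p \<and> p!j < p!i \<and> p!i < p!k \<and> p!m < p!j)"
  by (auto simp: occ_simps)

lemma occ4312: "occ p [4,3,1,2] idx \<longleftrightarrow> (\<exists>i j k m. idx = [i,j,k,m] \<and> i<j \<and> j<k \<and> k<m \<and> m<length p \<and> p!j < p!i \<and> p!m < p!j \<and> p!k < p!m)"
  by (auto simp: occ_simps)



lemma contains321: "contains p [3,2,1] \<longleftrightarrow> (\<exists>i j k. i<j \<and> j<k \<and> k<length p \<and> p!j < p!i \<and> p!k < p!j)"
  unfolding contains_def occ321 by blast
lemma contains4321: "contains p [4,3,2,1] \<longleftrightarrow> (\<exists>i j k m. i<j \<and> j<k \<and> k<m \<and> m<length p \<and> p!j < p!i \<and> p!k < p!j \<and> p!m < p!k)"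
  unfolding contains_def occ4321 by blast
lemma contains3241: "contains p [3,2,4,1] \<longleftrightarrow> (\<exists>i j k m. i<j \<and> j<k \<and> k<m \<and> m<length p \<and> p!j < p!i \<and> p!i < p!k \<and> p!m < p!j)"
  unfolding contains_def occ3241 by blast
lemma ex3: "(\<exists>idx. (\<exists>i j k. idx = [i,j,k] \<and> P i j k) \<and> Q idx) \<longleftrightarrow> (\<exists>i j k. P i j k \<and> Q [i,j,k])" by blast
lemma ex4: "(\<exists>idx. (\<exists>i j k m. idx = [i,j,k,m] \<and> P i j k m) \<and> Q idx) \<longleftrightarrow> (\<exists>i j k m. P i j k m \<and> Q [i,j,k,m])" by blast

lemma blue_pos_iff: "blue_pos p x \<longleftrightarrow> (\<exists>i k. i<x \<and> x<k \<and> k<length p \<and> p!x < p!i \<and> p!k < p!x) \<or>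
   (\<exists>i j k. i<j \<and> j<k \<and> k<x \<and> x<length p \<and> p!j < p!i \<and> p!x < p!j \<and> p!k < p!x)"
  unfolding blue_pos_def occ321 occ4312 ex3 ex4 by auto
lemma one321_iff: "one321_pos p x \<longleftrightarrow> (\<exists>i j. i<j \<and> j<x \<and> x<length p \<and> p!j < p!i \<and> p!x < p!j)"
  unfolding one321_pos_def occ321 ex3 by auto

lemma cut_iff:
  assumes "is_perm p" "k \<le> length p"
  shows "set (take k p) = {1..k} \<longleftrightarrow> (\<forall>i<k. \<forall>j. k \<le> j \<longrightarrow> j < length p \<longrightarrow> p!i < p!j)"
proof
  assume H: "set (take k p) = {1..k}"
  show "\<forall>i<k. \<forall>j. k \<le> j \<longrightarrow> j < length p \<longrightarrow> p!i < p!j"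
  proof (intro allI impI)
    fix i j assume ij: "i<k" "k\<le>j" "j<length p"
    have "p!i \<in> set (take k p)" using ij assms(2) by (auto simp: in_set_conv_nth intro!: exI[of _ i])
    hence a: "p!i \<le> k" using H by auto
    have "p!j \<in> set (drop k p)" using ij by (auto simp: in_set_conv_nth intro!: exI[of _ "j-k"])
    moreover have "set (take k p) \<inter> set (drop k p) = {}" using assms(1) unfolding is_perm_def
      by (metis append_take_drop_id distinct_append)
    moreover have "p!j \<in> {1..length p}" using assms(1) ij unfolding is_perm_def by auto
    ultimately have "p!j > k" using H by auto
    with a show "p!i < p!j" by simp
  qed
next
  assume H: "\<forall>i<k. \<forall>j. k \<le> j \<longrightarrow> j < length p \<longrightarrow> p!i < p!j"
  have dist: "distinct (take k p)" using assms(1) unfolding is_perm_def by simp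
  have ck: "card (set (take k p)) = k" using distinct_card[OF dist] assms(2) by simp
  have sub: "set (take k p) \<subseteq> {1..k}"
  proof
    fix x assume xin: "x \<in> set (take k p)"
    then obtain i where i: "i < k" "p!i = x" using assms(2) by (auto simp: in_set_conv_nth)
    have x1: "x \<ge> 1" using in_set_takeD[OF xin] assms(1) unfolding is_perm_def by auto
    have "x \<le> k"
    proof (rule ccontr)
      assume "\<not> x \<le> k"
      have "{1..x} \<subseteq> set (take k p)"
      proof
        fix v assume v: "v \<in> {1..x}"
        have "x \<le> length p" using in_set_takeD[OF xin] assms(1) unfolding is_perm_def by auto
        hence "v \<in> set p" using v assms(1) unfolding is_perm_def by auto
        then obtain j where j: "j < length p" "p!j = v" by (auto simp: in_set_conv_nth)
        have "j < k"
        proof (rule ccontr)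
          assume "\<not> j<k" hence "x < v" using H i j by auto
          thus False using v by auto
        qed
        thus "v \<in> set (take k p)" using j assms(2) by (auto simp: in_set_conv_nth intro!: exI[of _ j])
      qed
      hence "card {1..x} \<le> card (set (take k p))" by (intro card_mono) auto
      thus False using ck \<open>\<not> x \<le> k\<close> by simp
    qed
    thus "x \<in> {1..k}" using x1 by simp
  qed
  show "set (take k p) = {1..k}" using card_subset_eq[OF _ sub] ck by simp
qed



definition nonlr :: "nat list \<Rightarrow> nat \<Rightarrow> bool" where
  "nonlr p k \<longleftrightarrow> (\<exists>k'<k. p!k' > p!k)"

locale av = fixes p :: "nat list" assumes av: "avoider p"
begin

abbreviation "n \<equiv> length p"

lemma perm: "is_perm p" using av unfolding avoider_def indecomposable_def by auto
lemma dist: "distinct p" using perm unfolding is_perm_def by auto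
lemma setp: "set p = {1..n}" using perm unfolding is_perm_def by auto
lemma n1: "n \<ge> 1" using av unfolding avoider_def indecomposable_def by auto
lemma vals: "i < n \<Longrightarrow> 1 \<le> p!i \<and> p!i \<le> n"
  using setp nth_mem by fastforce
lemma inj: "i < n \<Longrightarrow> j < n \<Longrightarrow> p!i = p!j \<Longrightarrow> i = j"
  using dist nth_eq_iff_index_eq by blast
lemma surj: "1 \<le> v \<Longrightarrow> v \<le> n \<Longrightarrow> \<exists>i<n. p!i = v"
  using setp by (metis atLeastAtMost_iff in_set_conv_nth)
lemma no4321: "i<j \<Longrightarrow> j<k \<Longrightarrow> k<m \<Longrightarrow> m<n \<Longrightarrow> p!j<p!i \<Longrightarrow> p!k<p!j \<Longrightarrow> p!m<p!k \<Longrightarrow> False"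
  using av unfolding avoider_def contains4321 by blast
lemma no3241: "i<j \<Longrightarrow> j<k \<Longrightarrow> k<m \<Longrightarrow> m<n \<Longrightarrow> p!j<p!i \<Longrightarrow> p!i<p!k \<Longrightarrow> p!m<p!j \<Longrightarrow> False"
  using av unfolding avoider_def contains3241 by blast
lemma nocut: "1 \<le> k \<Longrightarrow> k < n \<Longrightarrow> \<forall>i<k. \<forall>j. k\<le>j \<longrightarrow> j<n \<longrightarrow> p!i<p!j \<Longrightarrow> False"
  using av cut_iff[OF perm, of k] unfolding avoider_def indecomposable_def by auto

abbreviation "c321 \<equiv> contains p [3,2,1]"
abbreviation "l \<equiv> last1_pos p"
abbreviation "a \<equiv> p ! l"

lemma one_fin: "finite {j. j < n \<and> one321_pos p j}" by simp

lemma l_props: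
  assumes c321
  shows "l < n" "one321_pos p l" "\<And>j. one321_pos p j \<Longrightarrow> j \<le> l"
proof -
  obtain i j k where ijk: "i<j" "j<k" "k<n" "p!j<p!i" "p!k<p!j" using assms contains321 by blast
  have ne: "k \<in> {j. j < n \<and> one321_pos p j}" using ijk one321_iff by auto
  have "l \<in> {j. j < n \<and> one321_pos p j}" unfolding last1_pos_def using Max_in[OF one_fin] ne by blast
  thus "l < n" "one321_pos p l" by auto
  fix j assume "one321_pos p j"
  hence "j \<in> {j. j < n \<and> one321_pos p j}" using one321_iff by auto
  thus "j \<le> l" unfolding last1_pos_def using Max_ge[OF one_fin] by blast
qed

lemma l_last: "c321 \<Longrightarrow> i<j \<Longrightarrow> j<k \<Longrightarrow> k<n \<Longrightarrow> p!j<p!i \<Longrightarrow> p!k<p!j \<Longrightarrow> k \<le> l"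
  using l_props(3) one321_iff by blast

lemma l_321: assumes c321 obtains i j where "i<j" "j<l" "p!j<p!i" "a<p!j"
  using l_props[OF assms] one321_iff by blast

definition "mm = Max {k. k < l \<and> p!k > a}"
abbreviation "b \<equiv> p ! mm"

lemma tb: "trip_b p = b" unfolding trip_b_def trip_a_def mm_def by simp
lemma ta: "trip_a p = a" unfolding trip_a_def by simp

lemma m_props:
  assumes c321
  shows "mm < l" "a < b" "\<And>k. k < l \<Longrightarrow> a < p!k \<Longrightarrow> k \<le> mm"
proof -
  obtain i j where ij: "i<j" "j<l" "p!j<p!i" "a<p!j" using l_321[OF assms] by blast
  have fin: "finite {k. k < l \<and> p!k > a}" by simp
  have "j \<in> {k. k < l \<and> p!k > a}" using ij by auto
  hence "mm \<in> {k. k < l \<and> p!k > a}" unfolding mm_def using Max_in[OF fin] by blast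
  thus "mm < l" "a < b" by auto
  fix k assume "k < l" "a < p!k"
  thus "k \<le> mm" unfolding mm_def using Max_ge[OF fin] by blast
qed

lemma m_between: "c321 \<Longrightarrow> mm < k \<Longrightarrow> k < l \<Longrightarrow> p!k < a"
proof -
  assume A: c321 "mm < k" "k < l"
  have "\<not> a < p!k" using m_props(3)[OF A(1) A(3)] A(2) by auto
  moreover have "p!k \<noteq> a" using inj[of k l] A l_props(1)[OF A(1)] by force
  ultimately show ?thesis by simp
qed

lemma K0: assumes c321 obtains i where "i < mm" "b < p!i"
proof -
  obtain i j where ij: "i<j" "j<l" "p!j<p!i" "a<p!j" using l_321[OF assms] by blast
  have ln: "l < n" using l_props(1)[OF assms] .
  have jm: "j \<le> mm" using m_props(3)[OF assms ij(2) ij(4)] .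
  have ml: "mm < l" using m_props(1)[OF assms] .
  have mn: "mm < n" using ml ln by simp
  show ?thesis
  proof (cases "j = mm")
    case True thus ?thesis using that ij by auto
  next
    case False
    hence jm': "j < mm" using jm by simp
    have "p!mm \<noteq> p!j" using inj[of mm j] jm' mn by auto
    moreover have "\<not> p!mm < p!j"
    proof
      assume "p!mm < p!j"
      thus False using no4321[of i j mm l] ij jm' ml ln m_props(2)[OF assms] by blast
    qed
    ultimately have mj: "p!j < p!mm" by simp
    have "p!mm \<noteq> p!i" using inj[of mm i] jm' mn ij by auto
    moreover have "\<not> p!i < p!mm"
    proof
      assume "p!i < p!mm"
      thus False using no3241[of i j mm l] ij jm' ml ln by blast
    qed
    ultimately have "b < p!i" by simp
    thus ?thesis using that[of i] ij(1) jm' by simp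
  qed
qed

lemma K1: assumes c321 "l < k" "k < n" shows "b < p!k"
proof -
  obtain i where i: "i < mm" "b < p!i" using K0[OF assms(1)] by blast
  have ml: "mm < l" using m_props(1)[OF assms(1)] .
  have "p!k \<noteq> b" using inj[of k mm] assms ml by auto
  moreover have "\<not> p!k < b"
  proof
    assume "p!k < b"
    hence "k \<le> l" using l_last[OF assms(1), of i mm k] i assms less_trans[OF ml assms(2)] by blast
    thus False using assms by simp
  qed
  ultimately show ?thesis by simp
qed

lemma K2: assumes c321 shows "b < n"
proof -
  obtain i where i: "i < mm" "b < p!i" using K0[OF assms] by blast
  have "i < n" using i m_props(1)[OF assms] l_props(1)[OF assms] by simp
  hence "p!i \<le> n" using vals by blast
  thus ?thesis using i by simp
qed

lemma K3: assumes c321 "i < j" "j < l" "p!j < p!i" "a < p!j" shows "p!j \<le> b"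
proof -
  have jm: "j \<le> mm" using m_props(3)[OF assms(1) assms(3) assms(5)] .
  have ln: "l < n" using l_props(1)[OF assms(1)] .
  have ml: "mm < l" using m_props(1)[OF assms(1)] .
  show ?thesis
  proof (cases "j = mm")
    case False
    hence jm': "j < mm" using jm by simp
    show ?thesis
    proof (rule ccontr)
      assume "\<not> p!j \<le> b"
      thus False using no4321[of i j mm l] assms jm' ml ln m_props(2)[OF assms(1)] by simp
    qed
  qed simp
qed

end


lemma last1_props:
  assumes "contains r [3,2,1]"
  shows "last1_pos r < length r" "one321_pos r (last1_pos r)" "\<And>j. one321_pos r j \<Longrightarrow> j \<le> last1_pos r"
proof -
  have fin: "finite {j. j < length r \<and> one321_pos r j}" by simp
  obtain i j k where ijk: "i<j" "j<k" "k<length r" "r!j<r!i" "r!k<r!j" using assms contains321 by blast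
  have ne: "k \<in> {j. j < length r \<and> one321_pos r j}" using ijk one321_iff by auto
  have "last1_pos r \<in> {j. j < length r \<and> one321_pos r j}" unfolding last1_pos_def using Max_in[OF fin] ne by blast
  thus "last1_pos r < length r" "one321_pos r (last1_pos r)" by auto
  fix j assume "one321_pos r j"
  hence "j \<in> {j. j < length r \<and> one321_pos r j}" using one321_iff by auto
  thus "j \<le> last1_pos r" unfolding last1_pos_def using Max_ge[OF fin] by blast
qed

definition bp :: "nat \<Rightarrow> nat \<Rightarrow> nat" where "bp y v = (if y \<le> v then Suc v else v)"

lemma bp_lt[simp]: "bp y u < bp y v \<longleftrightarrow> u < v" unfolding bp_def by auto
lemma bp_lt_y[simp]: "bp y u < y \<longleftrightarrow> u < y" unfolding bp_def by auto
lemma y_lt_bp[simp]: "y < bp y u \<longleftrightarrow> y \<le> u" unfolding bp_def by auto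
lemma bp_ne[simp]: "bp y u \<noteq> y" unfolding bp_def by auto

lemma ins_len: "t \<le> length p \<Longrightarrow> length (ins p (Suc t) y) = Suc (length p)"
  unfolding ins_def by (simp add: Let_def)

lemma ins_nth: assumes "t \<le> length p" "j \<le> length p"
  shows "ins p (Suc t) y ! j = (if j < t then bp y (p!j) else if j = t then y else bp y (p!(j-1)))"
proof -
  let ?p' = "map (\<lambda>x. if x \<ge> y then x + 1 else x) p"
  have e: "ins p (Suc t) y = take t ?p' @ y # drop t ?p'" unfolding ins_def by (simp add: Let_def)
  have lt: "length (take t ?p') = t" using assms by simp
  show ?thesis
  proof (cases "j < t")
    case True thus ?thesis unfolding e using assms by (simp add: nth_append bp_def)
  next
    case False
    show ?thesis
    proof (cases "j = t")
      case True thus ?thesis unfolding e using assms by (simp add: nth_append)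
    next
      case False
      hence "j > t" using \<open>\<not> j < t\<close> by simp
      then obtain d where d: "j - t = Suc d" by (metis Suc_diff_Suc)
      have "ins p (Suc t) y ! j = (y # drop t ?p') ! (j - t)" unfolding e using lt \<open>\<not> j < t\<close> by (simp add: nth_append)
      also have "\<dots> = drop t ?p' ! d" using d by simp
      also have "\<dots> = ?p' ! (t + d)" using assms d by (simp)
      also have "\<dots> = bp y (p!(j-1))"
      proof -
        have "t + d = j - 1" using d by simp
        thus ?thesis using assms d by (simp add: bp_def)
      qed
      finally show ?thesis using False \<open>\<not> j < t\<close> by simp
    qed
  qed
qed

locale avq = av +
  fixes y t :: nat
  assumes y1: "1 \<le> y" and yn: "y \<le> Suc n" and tn: "t \<le> n"
begin

definition "q = ins p (Suc t) y"
definition "emb k = (if k < t then k else Suc k)"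
definition "og x = (if x < t then x else x - 1)"

lemma q_len: "length q = Suc n" unfolding q_def using ins_len tn by simp
lemma q_lo: "j < t \<Longrightarrow> q!j = bp y (p!j)" unfolding q_def using ins_nth tn by simp
lemma q_t: "q!t = y" unfolding q_def using ins_nth tn by simp
lemma q_hi: "t < j \<Longrightarrow> j \<le> n \<Longrightarrow> q!j = bp y (p!(j-1))" unfolding q_def using ins_nth tn by simp

lemma q_emb: "k < n \<Longrightarrow> q!(emb k) = bp y (p!k)"
  unfolding emb_def using q_lo q_hi by auto
lemma emb_mono: "k < k' \<Longrightarrow> emb k < emb k'" unfolding emb_def by auto
lemma emb_le: "k < n \<Longrightarrow> emb k \<le> n" unfolding emb_def by auto
lemma emb_ne: "emb k \<noteq> t" unfolding emb_def by auto
lemma emb_lt: "emb k < t \<longleftrightarrow> k < t" unfolding emb_def by auto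
lemma q_og: "x \<le> n \<Longrightarrow> x \<noteq> t \<Longrightarrow> q!x = bp y (p!(og x))" unfolding og_def using q_lo q_hi by auto
lemma og_lt: "x \<le> n \<Longrightarrow> x \<noteq> t \<Longrightarrow> og x < n" unfolding og_def using tn by auto
lemma og_mono: "x < z \<Longrightarrow> x \<noteq> t \<Longrightarrow> z \<noteq> t \<Longrightarrow> og x < og z" unfolding og_def by auto
lemma emb_og: "x \<noteq> t \<Longrightarrow> emb (og x) = x" unfolding og_def emb_def by auto
lemma og_lo: "x < t \<Longrightarrow> og x = x" unfolding og_def by auto
lemma og_hi: "t < x \<Longrightarrow> og x = x - 1" unfolding og_def by auto

lemma q_lt_emb: "k < n \<Longrightarrow> k' < n \<Longrightarrow> q!(emb k) < q!(emb k') \<longleftrightarrow> p!k < p!k'"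
  using q_emb by simp

lemma one321_lift: assumes "one321_pos p k" shows "one321_pos q (emb k)"
proof -
  obtain i j where ij: "i<j" "j<k" "k<n" "p!j<p!i" "p!k<p!j" using assms one321_iff by blast
  show ?thesis unfolding one321_iff q_len
    using ij emb_mono[of i j] emb_mono[of j k] emb_le[of k] q_emb by (intro exI[of _ "emb i"] exI[of _ "emb j"]) auto
qed

lemma blue_lift: assumes "blue_pos p k" shows "blue_pos q (emb k)"
  using assms unfolding blue_pos_iff q_len
proof (elim disjE exE conjE)
  fix i k' assume h: "i < k" "k < k'" "k' < n" "p!k < p!i" "p!k' < p!k"
  show "(\<exists>i k'. i < emb k \<and> emb k < k' \<and> k' < Suc n \<and> q ! emb k < q ! i \<and> q ! k' < q ! emb k) \<or>
    (\<exists>i j k'. i < j \<and> j < k' \<and> k' < emb k \<and> emb k < Suc n \<and> q ! j < q ! i \<and> q ! emb k < q ! j \<and> q ! k' < q ! emb k)"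
    using h emb_mono[of i k] emb_mono[of k k'] emb_le[of k'] q_emb
    by (intro disjI1 exI[of _ "emb i"] exI[of _ "emb k'"]) auto
next
  fix i j k' assume h: "i < j" "j < k'" "k' < k" "k < n" "p!j < p!i" "p!k < p!j" "p!k' < p!k"
  show "(\<exists>i k'. i < emb k \<and> emb k < k' \<and> k' < Suc n \<and> q ! emb k < q ! i \<and> q ! k' < q ! emb k) \<or>
    (\<exists>i j k'. i < j \<and> j < k' \<and> k' < emb k \<and> emb k < Suc n \<and> q ! j < q ! i \<and> q ! emb k < q ! j \<and> q ! k' < q ! emb k)"
    using h emb_mono[of i j] emb_mono[of j k'] emb_mono[of k' k] emb_le[of k] q_emb
    by (intro disjI2 exI[of _ "emb i"] exI[of _ "emb j"] exI[of _ "emb k'"]) auto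
qed

end


context av begin

definition good :: "nat \<Rightarrow> nat \<Rightarrow> bool" where
 "good y t \<longleftrightarrow> (c321 \<and> a < y \<and> y \<le> b \<and> t = Suc l) \<or>
    (\<not>(c321 \<and> a < y \<and> y \<le> b) \<and> t < n \<and> (c321 \<longrightarrow> l \<le> t) \<and> nonlr p t \<and> p!t < y \<and>
     (\<forall>k. t < k \<longrightarrow> k < n \<longrightarrow> nonlr p k \<longrightarrow> y \<le> p!k))"

lemma trip_c_eq: "trip_c p = (if \<exists>k. l<k \<and> k<n \<and> nonlr p k then Some (p!(LEAST k. l<k \<and> k<n \<and> nonlr p k)) else None)"
  unfolding trip_c_def non_lrmax_pos_def nonlr_def by simp

lemma peak_c321: assumes c321 shows "peak_set p = {Suc a .. Suc b} \<union>
   (if \<exists>k. l<k \<and> k<n \<and> nonlr p k then {Suc (p!(LEAST k. l<k \<and> k<n \<and> nonlr p k)) .. n} else {})"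
proof (cases "\<exists>k. l<k \<and> k<n \<and> nonlr p k")
  case True
  hence "trip_c p = Some (p!(LEAST k. l<k \<and> k<n \<and> nonlr p k))" unfolding trip_c_eq by (simp only: if_True)
  thus ?thesis using assms True unfolding peak_set_def ta tb by (simp only: if_True option.case) simp
next
  case False
  hence "trip_c p = None" unfolding trip_c_eq by (simp only: if_False)
  thus ?thesis using assms False unfolding peak_set_def ta tb by (simp only: if_True if_False option.case) simp
qed

lemma peak_n321: "\<not> c321 \<Longrightarrow> peak_set p = {2..n}"
  unfolding peak_set_def by simp

end

context avq begin

lemma q4321: "i<j \<Longrightarrow> j<k \<Longrightarrow> k<m \<Longrightarrow> m \<le> n \<Longrightarrow> q!j<q!i \<Longrightarrow> q!k<q!j \<Longrightarrow> q!m<q!k \<Longrightarrow> contains q [4,3,2,1]"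
  unfolding contains4321 q_len by (intro exI[of _ i] exI[of _ j] exI[of _ k] exI[of _ m]) auto
lemma q3241: "i<j \<Longrightarrow> j<k \<Longrightarrow> k<m \<Longrightarrow> m \<le> n \<Longrightarrow> q!j<q!i \<Longrightarrow> q!i<q!k \<Longrightarrow> q!m<q!j \<Longrightarrow> contains q [3,2,4,1]"
  unfolding contains3241 q_len by (intro exI[of _ i] exI[of _ j] exI[of _ k] exI[of _ m]) auto

lemma qeq: "x \<le> n \<Longrightarrow> q!x = y \<Longrightarrow> x = t"
  using q_og[of x] bp_ne by metis

lemma necessity:
  assumes n1q: "\<not> contains q [4,3,2,1]" and n2q: "\<not> contains q [3,2,4,1]"
    and cq: "contains q [3,2,1]" and pk: "peak_blue q = y"
  shows "y \<in> peak_set p \<and> good y t"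
proof -
  define L where "L = last1_pos q"
  have L: "L < Suc n" "one321_pos q L" "\<And>j. one321_pos q j \<Longrightarrow> j \<le> L"
    using last1_props[OF cq] q_len unfolding L_def by auto
  obtain i j where ij: "i<j" "j<L" "q!j<q!i" "q!L<q!j" using L(2) one321_iff by blast
  have pk': "max (q!L) (q!(L-1)) = y" using pk unfolding peak_blue_def L_def .
  have "q!L = y \<or> q!(L-1) = y" using pk' unfolding max_def by (simp split: if_splits)
  hence LL: "L = t \<or> L - 1 = t" using qeq L(1) by auto
  show ?thesis
  proof (cases "L = t")
    case True
    have it: "i < t" "j < t" using ij True by auto
    have pij: "p!j < p!i" using ij(3) q_lo[OF it(1)] q_lo[OF it(2)] by simp
    have yj: "y \<le> p!j" using ij(4) True q_t q_lo[OF it(2)] by simp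
    have t1: "t - 1 < t" "t - 1 \<noteq> t" using it by auto
    have "t - 1 \<le> n" using tn by simp
    hence "q!(t-1) \<noteq> y" using qeq[of "t-1"] t1(2) by blast
    moreover have "q!(t-1) \<le> y" using pk' True q_t by simp
    ultimately have "q!(t-1) < y" by simp
    hence pt1: "p!(t-1) < y" using q_lo[OF t1(1)] by simp
    have "j \<noteq> t - 1" using pt1 yj by auto
    hence jt1: "j < t - 1" using it(2) by simp
    have tn1: "t - 1 < n" using tn it by simp
    have c: c321 unfolding contains321 using ij(1) jt1 tn1 pij yj pt1
      by (intro exI[of _ i] exI[of _ j] exI[of _ "t-1"]) auto
    have l1: "t - 1 \<le> l" using l_last[OF c ij(1) jt1 tn1 pij] yj pt1 by simp
    have l2: "l \<le> t - 1"
    proof (rule ccontr)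
      assume "\<not> l \<le> t - 1"
      hence "emb l = Suc l" unfolding emb_def by auto
      moreover have "emb l \<le> L" using L(3)[OF one321_lift[OF l_props(2)[OF c]]] .
      ultimately show False using True \<open>\<not> l \<le> t - 1\<close> by simp
    qed
    have tl: "t = Suc l" using l1 l2 it by simp
    have ay: "a < y" using pt1 l1 l2 by (metis le_antisym)
    have jl: "j < l" using jt1 l1 l2 by simp
    have yb: "y \<le> b" using K3[OF c ij(1) jl pij] ay yj by simp
    have g: "good y t" unfolding good_def using c ay yb tl by simp
    have "y \<in> peak_set p" using peak_c321[OF c] ay yb by auto
    thus ?thesis using g by simp
  next
    case False
    hence Lt: "L = Suc t" using LL ij by simp
    have tn': "t < n" using Lt L(1) by simp
    have qL: "q!L = bp y (p!t)" using q_hi[of L] Lt tn' by simp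
    have "q!L \<noteq> y" using bp_ne qL by simp
    moreover have "q!L \<le> y" using pk' Lt q_t by simp
    ultimately have "q!L < y" by simp
    hence pty: "p!t < y" using qL by simp
    have beta: "\<exists>i0<t. y \<le> p!i0"
    proof (cases "j = t")
      case True
      hence "i < t" using ij by simp
      thus ?thesis using ij(3) True q_t q_lo by (intro exI[of _ i]) auto
    next
      case False
      hence jt: "j < t" using ij Lt by simp
      have it: "i < t" using ij jt by simp
      show ?thesis
      proof (rule ccontr)
        assume nb: "\<not> ?thesis"
        have "q!i < q!t" using nb it q_lo[OF it] q_t by auto
        moreover have "q!(Suc t) < q!j" using ij(4) Lt by simp
        ultimately have "contains q [3,2,4,1]" using q3241[of i j t "Suc t"] ij(1,3) jt tn' by simp
        thus False using n2q by simp
      qed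
    qed
    then obtain i0 where i0: "i0 < t" "y \<le> p!i0" by blast
    have after: "\<And>k. t < k \<Longrightarrow> k < n \<Longrightarrow> y \<le> p!k"
    proof (rule ccontr)
      fix k assume k: "t < k" "k < n" "\<not> y \<le> p!k"
      have "one321_pos q (Suc k)" unfolding one321_iff q_len
        using k i0 q_lo[OF i0(1)] q_t q_hi[of "Suc k"] by (intro exI[of _ i0] exI[of _ t]) auto
      hence "Suc k \<le> L" using L(3) by blast
      thus False using k Lt by simp
    qed
    have nlt: "nonlr p t" unfolding nonlr_def using i0 pty by auto
    have lt: "c321 \<Longrightarrow> l \<le> t"
    proof -
      assume c: c321
      have "emb l \<le> L" using L(3)[OF one321_lift[OF l_props(2)[OF c]]] .
      thus "l \<le> t" unfolding emb_def using Lt by (auto split: if_splits)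
    qed
    have notE1: "\<not> (c321 \<and> a < y \<and> y \<le> b)"
    proof
      assume H: "c321 \<and> a < y \<and> y \<le> b"
      hence c: c321 by simp
      obtain i where i: "i < mm" "b < p!i" using K0[OF c] by blast
      have mt: "mm < t" using m_props(1)[OF c] lt[OF c] by simp
      have it: "i < t" using i mt by simp
      have "q!mm < q!i" using q_lo[OF mt] q_lo[OF it] i by simp
      moreover have "q!t < q!mm" using q_lo[OF mt] q_t H by simp
      moreover have "q!(Suc t) < q!t" using \<open>q!L < y\<close> Lt q_t by simp
      ultimately have "contains q [4,3,2,1]" using q4321[of i mm t "Suc t"] i mt tn' by simp
      thus False using n1q by simp
    qed
    have aft: "\<forall>k. t<k \<longrightarrow> k<n \<longrightarrow> nonlr p k \<longrightarrow> y \<le> p!k" using after by blast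
    have g: "good y t" unfolding good_def using notE1 tn' lt nlt pty aft by simp
    have yS: "y \<in> peak_set p"
    proof (cases c321)
      case False
      have "1 \<le> p!t" using vals tn' by simp
      moreover have "p!i0 \<le> n" using vals i0 tn' by simp
      ultimately have "y \<in> {2..n}" using pty i0 by simp
      thus ?thesis using peak_n321[OF False] by simp
    next
      case c: True
      show ?thesis
      proof (cases "l = t")
        case True
        have ay: "a < y" using True pty by simp
        have by': "b < y"
        proof (rule ccontr)
          assume "\<not> b < y" thus False using notE1 c ay by simp
        qed
        have yb1: "y = Suc b"
        proof (rule ccontr)
          assume "y \<noteq> Suc b"
          hence b1y: "Suc b < y" using by' by simp
          have "Suc b \<le> n" using K2[OF c] by simp
          then obtain r where r: "r < n" "p!r = Suc b" using surj[of "Suc b"] by auto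
          have ml: "mm < l" using m_props(1)[OF c] .
          have "r < mm"
          proof (rule ccontr)
            assume "\<not> r < mm"
            moreover have "r \<noteq> mm"
            proof assume "r = mm" thus False using r(2) by simp qed
            moreover have "\<not> (mm < r \<and> r < l)"
            proof
              assume "mm < r \<and> r < l" hence "p!r < a" using m_between[OF c] by blast
              thus False using r(2) m_props(2)[OF c] by simp
            qed
            moreover have "r \<noteq> l"
            proof assume "r = l" thus False using r(2) m_props(2)[OF c] by simp qed
            moreover have "\<not> t < r"
            proof
              assume "t < r" hence "y \<le> p!r" using after r(1) by blast
              thus False using r(2) b1y by simp
            qed
            ultimately show False using True by linarith
          qed
          have rt: "r < t" "mm < t" using \<open>r < mm\<close> ml True by auto
          have "q!mm < q!r" using q_lo[OF rt(1)] q_lo[OF rt(2)] r by simp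
          moreover have "q!r < q!t" using q_lo[OF rt(1)] q_t r b1y by simp
          moreover have "q!(Suc t) < q!mm" using q_hi[of "Suc t"] tn' q_lo[OF rt(2)] m_props(2)[OF c] True by simp
          ultimately have "contains q [3,2,4,1]" using q3241[of r mm t "Suc t"] \<open>r < mm\<close> rt tn' by simp
          thus False using n2q by simp
        qed
        show ?thesis using peak_c321[OF c] ay yb1 by auto
      next
        case False
        hence lt': "l < t" using lt[OF c] by simp
        have ex: "\<exists>k. l<k \<and> k<n \<and> nonlr p k" using lt' tn' nlt by blast
        define r where "r = (LEAST k. l<k \<and> k<n \<and> nonlr p k)"
        have r: "l < r" "r < n" "nonlr p r" using LeastI_ex[OF ex] unfolding r_def by auto
        have rt: "r \<le> t" unfolding r_def using lt' tn' nlt by (intro Least_le) auto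
        have cy: "p!r < y"
        proof (cases "r = t")
          case True thus ?thesis using pty by simp
        next
          case False
          hence rt': "r < t" using rt by simp
          show ?thesis
          proof (rule ccontr)
            assume "\<not> p!r < y"
            hence yr: "y \<le> p!r" by simp
            obtain k' where k': "k' < r" "p!r < p!k'" using r(3) unfolding nonlr_def by blast
            have kt: "k' < t" using k' rt' by simp
            have "q!r < q!k'" using q_lo[OF rt'] q_lo[OF kt] k' by simp
            moreover have "q!t < q!r" using q_lo[OF rt'] q_t yr by simp
            moreover have "q!(Suc t) < q!t" using \<open>q!L < y\<close> Lt q_t by simp
            ultimately have "contains q [4,3,2,1]" using q4321[of k' r t "Suc t"] k' rt' tn' by simp
            thus False using n1q by simp
          qed
        qed
        have "p!i0 \<le> n" using vals i0 tn' by simp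
        hence "y \<le> n" using i0 by simp
        hence "y \<in> {Suc (p!r)..n}" using cy by simp
        moreover have "peak_set p = {Suc a..Suc b} \<union> {Suc (p!r)..n}"
          using peak_c321[OF c] unfolding if_P[OF ex] r_def .
        ultimately show ?thesis by blast
      qed
    qed
    show ?thesis using yS g by simp
  qed
qed

end


lemma ins_perm:
  assumes "is_perm p" "1 \<le> y" "y \<le> Suc (length p)" "t \<le> length p"
  shows "is_perm (ins p (Suc t) y)"
proof -
  let ?f = "\<lambda>x. if x \<ge> y then x + 1 else x"
  let ?p' = "map ?f p"
  have e: "ins p (Suc t) y = take t ?p' @ y # drop t ?p'" unfolding ins_def by (simp add: Let_def)
  have injf: "inj ?f" by (auto simp: inj_on_def split: if_splits)
  have dp: "distinct ?p'" using assms(1) injf unfolding is_perm_def by (simp add: distinct_map inj_on_subset[OF injf])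
  have yn: "y \<notin> set ?p'" by auto
  have "distinct (take t ?p' @ y # drop t ?p')"
  proof -
    have "distinct (take t ?p' @ drop t ?p')" using dp by simp
    hence d: "distinct (take t ?p') \<and> distinct (drop t ?p') \<and> set (take t ?p') \<inter> set (drop t ?p') = {}"
      by (simp only: distinct_append)
    moreover have "y \<notin> set (take t ?p')" "y \<notin> set (drop t ?p')" using yn in_set_takeD in_set_dropD by fast+
    ultimately show ?thesis unfolding distinct_append by auto
  qed
  moreover have "set (take t ?p' @ y # drop t ?p') = insert y (set ?p')"
  proof -
    have "set (take t ?p' @ y # drop t ?p') = insert y (set (take t ?p' @ drop t ?p'))"
      by (simp only: set_append list.set(2) Un_insert_right)
    thus ?thesis by (simp only: append_take_drop_id)
  qed
  moreover have "insert y (set ?p') = {1..Suc (length p)}"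
  proof -
    have sp: "set p = {1..length p}" using assms(1) unfolding is_perm_def by simp
    have "set ?p' = ?f ` {1..length p}" using sp by simp
    also have "\<dots> = {1..Suc (length p)} - {y}"
    proof
      show "?f ` {1..length p} \<subseteq> {1..Suc (length p)} - {y}" by auto
      show "{1..Suc (length p)} - {y} \<subseteq> ?f ` {1..length p}"
      proof
        fix v assume v: "v \<in> {1..Suc (length p)} - {y}"
        show "v \<in> ?f ` {1..length p}"
        proof (cases "v < y")
          case True thus ?thesis using v assms by (intro image_eqI[of _ _ v]) auto
        next
          case False
          hence "v > y" using v by auto
          thus ?thesis using v assms by (intro image_eqI[of _ _ "v - 1"]) auto
        qed
      qed
    qed
    finally show ?thesis using assms by auto
  qed
  ultimately show ?thesis unfolding is_perm_def e using assms by (simp add: ins_len[unfolded ins_def Let_def])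
qed

context av begin

lemma yS_range: assumes "y \<in> peak_set p" shows "2 \<le> y" "y \<le> n"
proof -
  have "2 \<le> y \<and> y \<le> n"
  proof (cases c321)
    case False thus ?thesis using assms peak_n321 by auto
  next
    case c: True
    have a1: "1 \<le> a" using vals l_props(1)[OF c] by blast
    have bn: "b < n" using K2[OF c] .
    show ?thesis
    proof (cases "\<exists>k. l<k \<and> k<n \<and> nonlr p k")
      case True
      define r where "r = (LEAST k. l<k \<and> k<n \<and> nonlr p k)"
      have r: "l < r" "r < n" using LeastI_ex[OF True] unfolding r_def by auto
      have "1 \<le> p!r" using vals r(2) by blast
      moreover have "y \<in> {Suc a..Suc b} \<union> {Suc (p!r)..n}" using assms peak_c321[OF c] unfolding if_P[OF True] r_def by simp
      ultimately show ?thesis using a1 bn by auto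
    next
      case False
      have "y \<in> {Suc a..Suc b}" using assms peak_c321[OF c] unfolding if_not_P[OF False] by simp
      thus ?thesis using a1 bn by auto
    qed
  qed
  thus "2 \<le> y" "y \<le> n" by auto
qed

lemma exists_good: assumes yS: "y \<in> peak_set p" shows "\<exists>t \<le> n. good y t"
proof (cases "c321 \<and> a < y \<and> y \<le> b")
  case True
  hence "good y (Suc l)" unfolding good_def by simp
  moreover have "Suc l \<le> n" using l_props(1) True by simp
  ultimately show ?thesis by blast
next
  case notE1: False
  define Z where "Z = {k. (c321 \<longrightarrow> l \<le> k) \<and> k < n \<and> nonlr p k \<and> p!k < y}"
  have fin: "finite Z" unfolding Z_def by simp
  have ne: "Z \<noteq> {}"
  proof (cases c321)
    case False
    have y2: "2 \<le> y" "y \<le> n" using yS_range[OF yS] by auto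
    obtain r where r: "r < n" "p!r = 1" using surj[of 1] n1 by auto
    have "r \<noteq> 0"
    proof
      assume r0: "r = 0"
      have "\<forall>i<1. \<forall>j. 1\<le>j \<longrightarrow> j<n \<longrightarrow> p!i<p!j"
      proof (intro allI impI)
        fix i j assume "i < (1::nat)" "1 \<le> j" "j < n"
        hence "i = 0" "j \<noteq> 0" by auto
        moreover have "p!j \<noteq> 1" using inj[of j r] r \<open>j < n\<close> \<open>j \<noteq> 0\<close> r0 by auto
        moreover have "1 \<le> p!j" using vals \<open>j < n\<close> by blast
        ultimately show "p!i<p!j" using r r0 by simp
      qed
      thus False using nocut[of 1] y2 by simp
    qed
    hence "nonlr p r"
    proof -
      have "p!0 \<noteq> 1"
      proof
        assume "p!0 = 1"
        moreover have "0 < n" using r(1) by linarith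
        ultimately have "0 = r" using inj[of 0 r] r by simp
        thus False using \<open>r \<noteq> 0\<close> by simp
      qed
      moreover have "0 < n" using r(1) by linarith
      hence "1 \<le> p!0" using vals[of 0] by blast
      ultimately show ?thesis unfolding nonlr_def using \<open>r \<noteq> 0\<close> r by (intro exI[of _ 0]) auto
    qed
    hence "r \<in> Z" unfolding Z_def using False r y2 by simp
    thus ?thesis by blast
  next
    case c: True
    show ?thesis
    proof (cases "\<exists>k. l<k \<and> k<n \<and> nonlr p k")
      case True
      define r where "r = (LEAST k. l<k \<and> k<n \<and> nonlr p k)"
      have r: "l < r" "r < n" "nonlr p r" using LeastI_ex[OF True] unfolding r_def by auto
      have yin: "y \<in> {Suc a..Suc b} \<union> {Suc (p!r)..n}" using yS peak_c321[OF c] unfolding if_P[OF True] r_def by simp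
      show ?thesis
      proof (cases "y \<in> {Suc (p!r)..n}")
        case True
        hence "r \<in> Z" unfolding Z_def using r by auto
        thus ?thesis by blast
      next
        case False
        hence "y = Suc b" using yin notE1 c by auto
        obtain i j where ij: "i<j" "j<l" "p!j<p!i" "a<p!j" using l_321[OF c] by blast
        have "nonlr p l" unfolding nonlr_def using ij by (intro exI[of _ j]) auto
        hence "l \<in> Z" unfolding Z_def using l_props(1)[OF c] \<open>y = Suc b\<close> m_props(2)[OF c] by simp
        thus ?thesis by blast
      qed
    next
      case False
      have "y \<in> {Suc a..Suc b}" using yS peak_c321[OF c] unfolding if_not_P[OF False] by simp
      hence "y = Suc b" using notE1 c by auto
      obtain i j where ij: "i<j" "j<l" "p!j<p!i" "a<p!j" using l_321[OF c] by blast
      have "nonlr p l" unfolding nonlr_def using ij by (intro exI[of _ j]) auto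
      hence "l \<in> Z" unfolding Z_def using l_props(1)[OF c] \<open>y = Suc b\<close> m_props(2)[OF c] by simp
      thus ?thesis by blast
    qed
  qed
  define t where "t = Max Z"
  have tZ: "t \<in> Z" unfolding t_def using Max_in[OF fin ne] .
  have tmax: "\<And>k. k \<in> Z \<Longrightarrow> k \<le> t" unfolding t_def using Max_ge[OF fin] by blast
  have "\<forall>k. t < k \<longrightarrow> k < n \<longrightarrow> nonlr p k \<longrightarrow> y \<le> p!k"
  proof (intro allI impI)
    fix k assume k: "t < k" "k < n" "nonlr p k"
    show "y \<le> p!k"
    proof (rule ccontr)
      assume "\<not> y \<le> p!k"
      hence "k \<in> Z" using k tZ unfolding Z_def by auto
      thus False using tmax[of k] k by simp
    qed
  qed
  hence "good y t" unfolding good_def using notE1 tZ unfolding Z_def by simp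
  moreover have "t \<le> n" using tZ unfolding Z_def by simp
  ultimately show ?thesis by blast
qed

end


locale avg = avq +
  assumes gd: "good y t" and yS: "y \<in> peak_set p"
begin

abbreviation "E1 \<equiv> c321 \<and> a < y \<and> y \<le> b"

lemma y2: "2 \<le> y" and yn': "y \<le> n" using yS_range[OF yS] by auto

lemma E1_t: "E1 \<Longrightarrow> t = Suc l" using gd unfolding good_def by auto
lemma E1_after: "E1 \<Longrightarrow> t \<le> k \<Longrightarrow> k < n \<Longrightarrow> y < p!k"
proof -
  assume e: E1 and k: "t \<le> k" "k < n"
  have "l < k" using E1_t[OF e] k by simp
  hence "b < p!k" using K1 e k by blast
  thus "y < p!k" using e by simp
qed

lemma E2_facts: assumes "\<not> E1"
  shows "t < n" "c321 \<Longrightarrow> l \<le> t" "nonlr p t" "p!t < y" "\<And>k. t < k \<Longrightarrow> k < n \<Longrightarrow> nonlr p k \<Longrightarrow> y \<le> p!k"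
  using gd assms unfolding good_def by auto

lemma beta: "\<exists>i0<t. y \<le> p!i0"
proof (cases E1)
  case True
  have "mm < t" using m_props(1) True E1_t by simp
  thus ?thesis using True by (intro exI[of _ mm]) simp
next
  case False
  note f = E2_facts[OF False]
  show ?thesis
  proof (rule ccontr)
    assume nb: "\<not> ?thesis"
    have dc: "\<And>i j. i < j \<Longrightarrow> j < n \<Longrightarrow> p!j < y \<Longrightarrow> p!i < y"
    proof -
      fix i j assume ij: "i < j" "j < n" "p!j < y"
      show "p!i < y"
      proof (cases "j \<le> t")
        case True
        hence "i < t" using ij by simp
        thus ?thesis using nb by auto
      next
        case False
        hence "\<not> nonlr p j" using f(5)[of j] ij by auto
        hence "\<not> p!i > p!j" unfolding nonlr_def using ij by auto
        thus ?thesis using ij by simp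
      qed
    qed
    have exy: "\<exists>j. j < n \<and> y \<le> p!j" using surj[of y] y2 yn' by auto
    define K where "K = (LEAST j. j < n \<and> y \<le> p!j)"
    have K: "K < n" "y \<le> p!K" using LeastI_ex[OF exy] unfolding K_def by auto
    have lowK: "\<And>i. i < K \<Longrightarrow> p!i < y"
    proof -
      fix i assume "i < K"
      hence "\<not> (i < n \<and> y \<le> p!i)" unfolding K_def by (rule not_less_Least)
      thus "p!i < y" using \<open>i < K\<close> K by simp
    qed
    have K0: "K \<noteq> 0"
    proof
      assume "K = 0"
      have "p!0 < y"
      proof (cases "t = 0")
        case True thus ?thesis using f(4) by simp
      next
        case False thus ?thesis using nb by auto
      qed
      thus False using K \<open>K = 0\<close> by simp
    qed
    have "\<forall>i<K. \<forall>j. K\<le>j \<longrightarrow> j<n \<longrightarrow> p!i<p!j"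
    proof (intro allI impI)
      fix i j assume ij: "i < K" "K \<le> j" "j < n"
      have "y \<le> p!j"
      proof (rule ccontr)
        assume "\<not> y \<le> p!j"
        hence "p!j < y" by simp
        show False
        proof (cases "K = j")
          case True thus False using K \<open>p!j < y\<close> by simp
        next
          case False
          hence "K < j" using ij by simp
          thus False using dc[of K j] ij \<open>p!j < y\<close> K by simp
        qed
      qed
      thus "p!i < p!j" using lowK[OF ij(1)] by simp
    qed
    thus False using nocut[of K] K0 K by simp
  qed
qed

lemma E2_after: "\<not> E1 \<Longrightarrow> t < k \<Longrightarrow> k < n \<Longrightarrow> y \<le> p!k"
proof -
  assume e: "\<not> E1" and k: "t < k" "k < n"
  obtain i0 where i0: "i0 < t" "y \<le> p!i0" using beta by blast
  show "y \<le> p!k"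
  proof (rule ccontr)
    assume "\<not> y \<le> p!k"
    hence "nonlr p k" unfolding nonlr_def using i0 k by (intro exI[of _ i0]) auto
    thus False using E2_facts(5)[OF e k] \<open>\<not> y \<le> p!k\<close> by simp
  qed
qed

lemma E2_tl: assumes "\<not> E1" c321 "t = l" shows "y = Suc b"
proof -
  have pt: "p!t < y" using E2_facts(4)[OF assms(1)] .
  have ay: "a < y" using pt assms(3) by simp
  have by': "b < y" using assms(1,2) ay by auto
  show ?thesis
  proof (cases "\<exists>k. l<k \<and> k<n \<and> nonlr p k")
    case True
    define r where "r = (LEAST k. l<k \<and> k<n \<and> nonlr p k)"
    have r: "l < r" "r < n" "nonlr p r" using LeastI_ex[OF True] unfolding r_def by auto
    have "y \<le> p!r" using E2_facts(5)[OF assms(1), of r] r assms(3) by simp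
    hence "y \<notin> {Suc (p!r)..n}" by simp
    moreover have "y \<in> {Suc a..Suc b} \<union> {Suc (p!r)..n}" using yS peak_c321[OF assms(2)] unfolding if_P[OF True] r_def by simp
    ultimately show ?thesis using by' by auto
  next
    case False
    have "y \<in> {Suc a..Suc b}" using yS peak_c321[OF assms(2)] unfolding if_not_P[OF False] by simp
    thus ?thesis using by' by auto
  qed
qed

end


context avg begin

lemma qo: "x \<le> n \<Longrightarrow> x \<noteq> t \<Longrightarrow> q!x = bp y (p!(og x)) \<and> og x < n"
  using q_og og_lt by blast

lemma t_321_l: assumes "\<not> E1" "i < j" "j < t" "p!j < p!i" "y \<le> p!j" shows False
proof -
  note f = E2_facts[OF assms(1)]
  have c: c321 unfolding contains321 using assms f(1,4)
    by (intro exI[of _ i] exI[of _ j] exI[of _ t]) auto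
  have "t \<le> l" using l_last[OF c assms(2,3) f(1) assms(4)] assms(5) f(4) by simp
  hence tl: "t = l" using f(2)[OF c] by simp
  have "p!j \<le> b" using K3[OF c assms(2)] assms tl f(4) by simp
  thus False using assms(1) c tl f(4) assms(5) by simp
qed

lemma q_no4321: "\<not> contains q [4,3,2,1]"
proof
  assume "contains q [4,3,2,1]"
  then obtain i j k m where o: "i<j" "j<k" "k<m" "m \<le> n" "q!j<q!i" "q!k<q!j" "q!m<q!k"
    unfolding contains4321 q_len by auto
  consider (none) "i \<noteq> t" "j \<noteq> t" "k \<noteq> t" "m \<noteq> t" | (i) "i = t" | (j) "j = t" | (k) "k = t" | (m) "m = t" by blast
  thus False
  proof cases
    case none
    have "p!(og j) < p!(og i)" "p!(og k) < p!(og j)" "p!(og m) < p!(og k)"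
      using o none qo[of i] qo[of j] qo[of k] qo[of m] by auto
    thus False using no4321[of "og i" "og j" "og k" "og m"] og_mono none o og_lt[of m] by simp
  next
    case i
    have jt: "j \<noteq> t" "k \<noteq> t" "t < j" "t < k" using o i by auto
    have v: "p!(og j) < y" "p!(og k) < p!(og j)" using o(5,6) i q_t qo[of j] qo[of k] jt o by auto
    have oj: "t \<le> og j" "t < og k" "og k < n" using og_hi jt o og_lt[of k] by auto
    show False
    proof (cases E1)
      case True thus False using E1_after[OF True oj(1)] v oj og_lt[of j] o jt by simp
    next
      case False thus False using E2_after[OF False oj(2,3)] v by simp
    qed
  next
    case j
    have jt: "k \<noteq> t" "m \<noteq> t" "t < k" "t < m" using o j by auto
    have v: "p!(og k) < y" "p!(og m) < p!(og k)" using o(6,7) j q_t qo[of k] qo[of m] jt o by auto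
    have oj: "t < og m" "og m < n" using og_hi jt o og_lt[of m] by auto
    show False
    proof (cases E1)
      case True thus False using E1_after[OF True _ oj(2)] v oj by simp
    next
      case False thus False using E2_after[OF False oj(1,2)] v by simp
    qed
  next
    case k
    have it: "i < t" "j < t" "m \<noteq> t" "t < m" using o k by auto
    have v: "p!j < p!i" "y \<le> p!j" "p!(og m) < y" using o(5,6,7) k q_t q_lo it qo[of m] o by auto
    have om: "t \<le> og m" "og m < n" using og_hi it o og_lt[of m] by auto
    show False
    proof (cases E1)
      case True thus False using E1_after[OF True om] v by simp
    next
      case False
      show False
      proof (cases "og m = t")
        case True
        thus False using t_321_l[OF False o(1) it(2)] v by simp
      next
        case ne: False
        thus False using E2_after[OF False _ om(2)] om v by simp
      qed
    qed
  next
    case m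
    have it: "i < t" "j < t" "k < t" using o m by auto
    have v: "p!j < p!i" "p!k < p!j" "y \<le> p!k" using o(5,6,7) m q_t q_lo it by auto
    show False
    proof (cases E1)
      case True
      have tl: "t = Suc l" using E1_t[OF True] .
      have "k \<noteq> l" using v True by auto
      hence "k < l" using it tl by simp
      thus False using no4321[of i j k l] o v True l_props(1) by simp
    next
      case False
      note f = E2_facts[OF False]
      show False using no4321[of i j k t] o it v f(1,4) by simp
    qed
  qed
qed

lemma q_no3241: "\<not> contains q [3,2,4,1]"
proof
  assume "contains q [3,2,4,1]"
  then obtain i j k m where o: "i<j" "j<k" "k<m" "m \<le> n" "q!j<q!i" "q!i<q!k" "q!m<q!j"
    unfolding contains3241 q_len by auto
  consider (none) "i \<noteq> t" "j \<noteq> t" "k \<noteq> t" "m \<noteq> t" | (i) "i = t" | (j) "j = t" | (k) "k = t" | (m) "m = t" by blast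
  thus False
  proof cases
    case none
    have "p!(og j) < p!(og i)" "p!(og i) < p!(og k)" "p!(og m) < p!(og j)"
      using o none qo[of i] qo[of j] qo[of k] qo[of m] by auto
    thus False using no3241[of "og i" "og j" "og k" "og m"] og_mono none o og_lt[of m] by simp
  next
    case i
    have jt: "j \<noteq> t" "m \<noteq> t" "t < j" "t < m" using o i by auto
    have v: "p!(og j) < y" "p!(og m) < p!(og j)" using o(5,7) i q_t qo[of j] qo[of m] jt o by auto
    have oj: "t \<le> og j" "og j < n" "t < og m" "og m < n" using og_hi jt o og_lt[of m] og_lt[of j] og_mono[of j m] by auto
    show False
    proof (cases E1)
      case True thus False using E1_after[OF True oj(1,2)] v by simp
    next
      case False thus False using E2_after[OF False oj(3,4)] v by simp
    qed
  next
    case j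
    have jt: "k \<noteq> t" "m \<noteq> t" "t < k" "t < m" using o j by auto
    have v: "p!(og m) < y" using o(7) j q_t qo[of m] jt o by auto
    have oj: "t < og m" "og m < n" using og_hi jt o og_lt[of m] og_mono[of k m] by auto
    show False
    proof (cases E1)
      case True thus False using E1_after[OF True _ oj(2)] v oj by simp
    next
      case False thus False using E2_after[OF False oj(1,2)] v by simp
    qed
  next
    case k
    have it: "i < t" "j < t" "m \<noteq> t" "t < m" using o k by auto
    have v: "p!j < p!i" "p!i < y" "p!(og m) < p!j" using o(5,6,7) k q_t q_lo it qo[of m] o by auto
    have om: "t \<le> og m" "og m < n" using og_hi it o og_lt[of m] by auto
    show False
    proof (cases E1)
      case True thus False using E1_after[OF True om] v by simp
    next
      case False
      note f = E2_facts[OF False]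
      show False
      proof (cases "og m = t")
        case ne: False
        thus False using E2_after[OF False _ om(2)] om v by simp
      next
        case True
        have ptj: "p!t < p!j" using v True by simp
        have c: c321 unfolding contains321 using o(1) it v ptj f(1)
          by (intro exI[of _ i] exI[of _ j] exI[of _ t]) auto
        have "t \<le> l" using l_last[OF c o(1) it(2) f(1)] v ptj by simp
        hence tl: "t = l" using f(2)[OF c] by simp
        have yb: "y = Suc b" using E2_tl[OF False c tl] .
        have jl: "j < l" using it tl by simp
        have aj: "a < p!j" using ptj tl by simp
        have jm: "j \<le> mm" using m_props(3)[OF c jl aj] .
        have ml: "mm < l" using m_props(1)[OF c] .
        have ln: "l < n" using l_props(1)[OF c] .
        show False
        proof (cases "j = mm")
          case True thus False using v yb by simp
        next
          case False
          hence jm': "j < mm" using jm by simp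
          have "\<not> p!mm < p!j"
          proof
            assume "p!mm < p!j"
            thus False using no4321[of i j mm l] o(1) jm' ml ln v m_props(2)[OF c] by simp
          qed
          moreover have "p!mm \<noteq> p!j" using inj[of mm j] jm' ml ln by auto
          ultimately have jmv: "p!j < p!mm" by simp
          have "p!i \<noteq> p!mm" using inj[of i mm] o(1) jm' ml ln by auto
          hence "p!i < p!mm" using v yb by simp
          thus False using no3241[of i j mm l] o(1) jm' ml ln v aj by simp
        qed
      qed
    qed
  next
    case m
    have it: "i < t" "j < t" "k < t" using o m by auto
    have v: "p!j < p!i" "p!i < p!k" "y \<le> p!j" using o(5,6,7) m q_t q_lo it by auto
    show False
    proof (cases E1)
      case True
      have tl: "t = Suc l" using E1_t[OF True] .
      have "k \<noteq> l" using v True by auto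
      hence "k < l" using it tl by simp
      thus False using no3241[of i j k l] o v True l_props(1) by simp
    next
      case False
      note f = E2_facts[OF False]
      show False using no3241[of i j k t] o it v f(1,4) by simp
    qed
  qed
qed

definition "LL = (if E1 then t else Suc t)"

lemma L_one: "one321_pos q LL"
proof (cases E1)
  case True
  obtain i where i: "i < mm" "b < p!i" using K0 True by blast
  have mt: "mm < t" using m_props(1) True E1_t by simp
  show ?thesis unfolding one321_iff LL_def q_len using True i mt q_lo[OF mt] q_lo[of i] q_t tn
    by (intro exI[of _ i] exI[of _ mm]) auto
next
  case False
  obtain i0 where i0: "i0 < t" "y \<le> p!i0" using beta by blast
  note f = E2_facts[OF False]
  show ?thesis unfolding one321_iff LL_def q_len using False i0 q_lo[OF i0(1)] q_t q_hi[of "Suc t"] f(1,4)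
    by (intro exI[of _ i0] exI[of _ t]) auto
qed

lemma L_le: "LL \<le> n" unfolding LL_def using tn E2_facts(1) by auto

lemma L_max: "one321_pos q x \<Longrightarrow> x \<le> LL"
proof (rule ccontr)
  assume h: "one321_pos q x" "\<not> x \<le> LL"
  then obtain i j where o: "i<j" "j<x" "x \<le> n" "q!j<q!i" "q!x<q!j" unfolding one321_iff q_len by auto
  have xt: "t < x" "x \<noteq> t" using h(2) unfolding LL_def by (auto split: if_splits)
  have ox: "t \<le> og x" "og x < n" using og_hi[OF xt(1)] xt o og_lt[of x] by auto
  have qx: "q!x = bp y (p!(og x))" using qo[of x] xt o by auto
  have yx: "y < q!x"
  proof (cases E1)
    case True thus ?thesis using E1_after[OF True ox] qx by simp
  next
    case False
    have "t < og x" using h(2) xt og_hi[OF xt(1)] unfolding LL_def using False by auto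
    thus ?thesis using E2_after[OF False _ ox(2)] qx by simp
  qed
  consider (none) "i \<noteq> t" "j \<noteq> t" | (i) "i = t" | (j) "j = t" by blast
  thus False
  proof cases
    case j thus False using o yx q_t by simp
  next
    case i
    have jt: "t < j" "j \<noteq> t" using o i by auto
    have oj: "t \<le> og j" "og j < n" using og_hi[OF jt(1)] jt o og_lt[of j] by auto
    have qj: "q!j < y" using o(4) i q_t by simp
    thus False using o(5) yx by simp
  next
    case none
    have v: "p!(og j) < p!(og i)" "p!(og x) < p!(og j)" using o none qo[of i] qo[of j] qx xt by auto
    have c: c321 unfolding contains321 using v og_mono[of i j] og_mono[of j x] none o xt ox
      by (intro exI[of _ "og i"] exI[of _ "og j"] exI[of _ "og x"]) auto
    have "og x \<le> l" using l_last[OF c _ _ ox(2) v(1) v(2)] og_mono[of i j] og_mono[of j x] none o xt by simp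
    moreover have "l < og x"
    proof (cases E1)
      case True thus ?thesis using E1_t ox by simp
    next
      case False
      have "t < og x" using h(2) xt og_hi[OF xt(1)] unfolding LL_def using False by auto
      thus ?thesis using E2_facts(2)[OF False c] by simp
    qed
    ultimately show False by simp
  qed
qed

lemma last1_eq: "contains r [3,2,1] \<Longrightarrow> one321_pos r L \<Longrightarrow> (\<And>x. one321_pos r x \<Longrightarrow> x \<le> L) \<Longrightarrow> last1_pos r = L"
  using last1_props[of r] by (meson le_antisym)

lemma q_c321: "contains q [3,2,1]"
  using L_one unfolding one321_iff contains321 by blast

lemma q_last1: "last1_pos q = LL" using last1_eq[OF q_c321 L_one L_max] by blast

lemma q_peak: "peak_blue q = y"
proof (cases E1)
  case True
  have tl: "t = Suc l" using E1_t[OF True] .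
  have "q!(t-1) = a" using q_lo[of l] tl True unfolding bp_def by simp
  thus ?thesis unfolding peak_blue_def q_last1 LL_def using True q_t by simp
next
  case False
  note f = E2_facts[OF False]
  have "q!(Suc t) = p!t" using q_hi[of "Suc t"] f(1,4) unfolding bp_def by simp
  moreover have "LL = Suc t" unfolding LL_def by (rule if_not_P[OF False])
  ultimately show ?thesis unfolding peak_blue_def q_last1 using q_t f(4) by simp
qed

end


context avg begin

lemma q_perm: "is_perm q" unfolding q_def using ins_perm[OF perm y1 yn tn] .

lemma q_indec: "indecomposable q"
proof -
  have "\<not> (\<exists>K. 1 \<le> K \<and> K < length q \<and> set (take K q) = {1..K})"
  proof
    assume "\<exists>K. 1 \<le> K \<and> K < length q \<and> set (take K q) = {1..K}"
    then obtain K where K: "1 \<le> K" "K < Suc n" "set (take K q) = {1..K}" using q_len by auto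
    have cq: "\<And>i j. i < K \<Longrightarrow> K \<le> j \<Longrightarrow> j < Suc n \<Longrightarrow> q!i < q!j"
      using cut_iff[OF q_perm, of K] K q_len by auto
    show False
    proof (cases "K \<le> t")
      case True
      show False
      proof (cases "K < n")
        case Kn: True
        have "\<forall>i<K. \<forall>j. K\<le>j \<longrightarrow> j<n \<longrightarrow> p!i<p!j"
        proof (intro allI impI)
          fix i j assume ij: "i < K" "K \<le> j" "j < n"
          have "K \<le> emb j" "emb j < Suc n" using ij emb_le[of j] unfolding emb_def by auto
          hence "q!i < q!(emb j)" using cq ij by blast
          thus "p!i < p!j" using q_lo[of i] q_emb[of j] ij True by simp
        qed
        thus False using nocut[of K] K Kn by simp
      next
        case False
        hence Kn: "K = n" "t = n" using K True tn by auto
        obtain r where r: "r < n" "p!r = n" using surj[of n] n1 by auto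
        have "q!r < q!t" using cq[of r t] r Kn by simp
        thus False using q_lo[of r] q_t r Kn yn' by simp
      qed
    next
      case False
      show False
      proof (cases "K = 1")
        case True
        hence t0: "t = 0" using False by simp
        obtain r where r: "r < n" "p!r = 1" using surj[of 1] n1 by auto
        have "q!0 < q!(Suc r)" using cq[of 0 "Suc r"] True r by simp
        moreover have "q!(Suc r) = bp y 1" using q_hi[of "Suc r"] t0 r by simp
        ultimately show False using q_t t0 y2 unfolding bp_def by simp
      next
        case K1: False
        define K' where "K' = K - 1"
        have K': "1 \<le> K'" "K' < n" "t \<le> K'" using K K1 False unfolding K'_def by auto
        have "\<forall>i<K'. \<forall>j. K'\<le>j \<longrightarrow> j<n \<longrightarrow> p!i<p!j"
        proof (intro allI impI)
          fix i j assume ij: "i < K'" "K' \<le> j" "j < n"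
          have "emb i < K" "K \<le> emb j" "emb j < Suc n" using ij K' unfolding emb_def K'_def by auto
          hence "q!(emb i) < q!(emb j)" using cq by blast
          thus "p!i < p!j" using q_emb[of i] q_emb[of j] ij K' by simp
        qed
        thus False using nocut[of K'] K' by simp
      qed
    qed
  qed
  thus ?thesis unfolding indecomposable_def using q_perm q_len by simp
qed

lemma q_avoider: "avoider q"
  unfolding avoider_def using q_indec q_no4321 q_no3241 by simp

lemma q_blue_t: "blue_pos q t"
proof (cases E1)
  case True
  obtain i where i: "i < mm" "b < p!i" using K0 True by blast
  have tl: "t = Suc l" using E1_t[OF True] .
  have ml: "mm < l" using m_props(1) True by simp
  have lt: "l < t" "mm < t" "i < t" using tl ml i by auto
  have v: "q!mm < q!i" "q!t < q!mm" "q!l < q!t" using q_lo[OF lt(1)] q_lo[OF lt(2)] q_lo[OF lt(3)] q_t i True by auto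
  show ?thesis unfolding blue_pos_iff q_len using i(1) ml lt v tn
    by (intro disjI2 exI[of _ i] exI[of _ mm] exI[of _ l]) auto
next
  case False
  obtain i0 where i0: "i0 < t" "y \<le> p!i0" using beta by blast
  note f = E2_facts[OF False]
  show ?thesis unfolding blue_pos_iff q_len using False i0 q_lo[OF i0(1)] q_t q_hi[of "Suc t"] f(1,4)
    by (intro disjI1 exI[of _ i0] exI[of _ "Suc t"]) auto
qed

lemma q_blue_back: assumes x: "x \<le> n" "x \<noteq> t" and bq: "blue_pos q x" shows "blue_pos p (og x)"
proof -
  have qx: "q!x = bp y (p!(og x))" "og x < n" using qo x by auto
  from bq show ?thesis unfolding blue_pos_iff q_len
  proof (elim disjE exE conjE)
    fix i k assume o: "i < x" "x < k" "k < Suc n" "q!x < q!i" "q!k < q!x"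
    consider (none) "i \<noteq> t" "k \<noteq> t" | (i) "i = t" | (k) "k = t" by blast
    thus "(\<exists>i k. i < og x \<and> og x < k \<and> k < n \<and> p ! og x < p ! i \<and> p ! k < p ! og x) \<or>
          (\<exists>i j k. i < j \<and> j < k \<and> k < og x \<and> og x < n \<and> p ! j < p ! i \<and> p ! og x < p ! j \<and> p ! k < p ! og x)"
    proof cases
      case none
      have "p!(og x) < p!(og i)" "p!(og k) < p!(og x)" using o none qo[of i] qo[of k] qx x by auto
      moreover have "og i < og x" "og x < og k" "og k < n" using og_mono o none x og_lt[of k] by auto
      ultimately show ?thesis by blast
    next
      case i
      have xt: "t < x" "t < k" "k \<noteq> t" using o i by auto
      have v: "p!(og x) < y" "p!(og k) < p!(og x)" using o(4,5) i q_t qx qo[of k] xt o by auto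
      have ox: "t \<le> og x" "t < og k" "og k < n" using og_hi xt og_mono[of x k] o x og_lt[of k] by auto
      show ?thesis
      proof (cases E1)
        case True thus ?thesis using E1_after[OF True ox(1) qx(2)] v by simp
      next
        case False thus ?thesis using E2_after[OF False ox(2,3)] v by simp
      qed
    next
      case k
      have it: "i < t" "x < t" using o k by auto
      have v: "p!x < p!i" "y \<le> p!x" "og x = x" using o(4,5) k q_t q_lo it og_lo by auto
      show ?thesis
      proof (cases E1)
        case True
        have tl: "t = Suc l" using E1_t[OF True] .
        have "x \<noteq> l" using v True by auto
        hence "x < l" using it tl by simp
        thus ?thesis using v True o l_props(1) it by (intro disjI1 exI[of _ i] exI[of _ l]) auto
      next
        case False
        note f = E2_facts[OF False]
        have "i < og x \<and> og x < t \<and> t < n \<and> p!(og x) < p!i \<and> p!t < p!(og x)" using v it f(1,4) o(1) by simp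
        thus ?thesis by blast
      qed
    qed
  next
    fix i j k assume o: "i < j" "j < k" "k < x" "x < Suc n" "q!j < q!i" "q!x < q!j" "q!k < q!x"
    consider (none) "i \<noteq> t" "j \<noteq> t" "k \<noteq> t" | (i) "i = t" | (j) "j = t" | (k) "k = t" by blast
    thus "(\<exists>i k. i < og x \<and> og x < k \<and> k < n \<and> p ! og x < p ! i \<and> p ! k < p ! og x) \<or>
          (\<exists>i j k. i < j \<and> j < k \<and> k < og x \<and> og x < n \<and> p ! j < p ! i \<and> p ! og x < p ! j \<and> p ! k < p ! og x)"
    proof cases
      case none
      have "p!(og j) < p!(og i)" "p!(og x) < p!(og j)" "p!(og k) < p!(og x)" using o none qo[of i] qo[of j] qo[of k] qx x by auto
      moreover have "og i < og j" "og j < og k" "og k < og x" using og_mono o none x by auto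
      ultimately show ?thesis using qx(2) by blast
    next
      case i
      have jt: "t < j" "j \<noteq> t" "k \<noteq> t" "t < k" using o i by auto
      have v: "p!(og j) < y" "p!(og x) < p!(og j)" "p!(og k) < p!(og x)" using o(5,6,7) i q_t qx qo[of j] qo[of k] jt o x by auto
      have oj: "t \<le> og j" "og j < n" "t < og k" "og k < n" using og_hi jt og_mono[of j k] o x og_lt[of j] og_lt[of k] by auto
      show ?thesis
      proof (cases E1)
        case True thus ?thesis using E1_after[OF True oj(1,2)] v by simp
      next
        case False thus ?thesis using E2_after[OF False oj(3,4)] v by simp
      qed
    next
      case j
      have kt: "t < k" "k \<noteq> t" using o j by auto
      have v: "p!(og x) < y" using o(6) j q_t qx by simp
      have ox: "t < og x" using og_hi[of x] og_hi[of k] kt o x og_mono[of k x] by auto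
      show ?thesis
      proof (cases E1)
        case True thus ?thesis using E1_after[OF True _ qx(2)] ox v by simp
      next
        case False thus ?thesis using E2_after[OF False ox qx(2)] v by simp
      qed
    next
      case k
      have it: "i < t" "j < t" "t < x" using o k by auto
      have v: "p!j < p!i" "p!(og x) < p!j" "y \<le> p!(og x)" using o(5,6,7) k q_t q_lo it qx by auto
      have ox: "t \<le> og x" using og_hi[OF it(3)] it by simp
      show ?thesis
      proof (cases E1)
        case True
        have tl: "t = Suc l" using E1_t[OF True] .
        have "j \<noteq> l" using v True by auto
        hence "j < l" using it tl by simp
        thus ?thesis using v True o ox tl qx(2) by (intro disjI2 exI[of _ i] exI[of _ j] exI[of _ l]) auto
      next
        case False
        note f = E2_facts[OF False]
        have "og x \<noteq> t" using v f(4) by auto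
        hence "t < og x" using ox by simp
        hence "i < j \<and> j < t \<and> t < og x \<and> og x < n \<and> p!j < p!i \<and> p!(og x) < p!j \<and> p!t < p!(og x)"
          using v it f(4) qx(2) o(1) by simp
        thus ?thesis by blast
      qed
    qed
  qed
qed

lemma blue_set: "{j. j < length q \<and> blue_pos q j} = insert t (emb ` {k. k < n \<and> blue_pos p k})"
proof
  show "{j. j < length q \<and> blue_pos q j} \<subseteq> insert t (emb ` {k. k < n \<and> blue_pos p k})"
  proof
    fix x assume "x \<in> {j. j < length q \<and> blue_pos q j}"
    hence x: "x \<le> n" "blue_pos q x" using q_len by auto
    show "x \<in> insert t (emb ` {k. k < n \<and> blue_pos p k})"
    proof (cases "x = t")
      case False
      hence "blue_pos p (og x)" "og x < n" "emb (og x) = x" using q_blue_back x og_lt emb_og by auto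
      thus ?thesis by (metis (mono_tags, lifting) image_eqI insertI2 mem_Collect_eq)
    qed simp
  qed
  show "insert t (emb ` {k. k < n \<and> blue_pos p k}) \<subseteq> {j. j < length q \<and> blue_pos q j}"
  proof
    fix x assume "x \<in> insert t (emb ` {k. k < n \<and> blue_pos p k})"
    then consider "x = t" | k where "x = emb k" "k < n" "blue_pos p k" by auto
    thus "x \<in> {j. j < length q \<and> blue_pos q j}"
    proof cases
      case 1 thus ?thesis using q_blue_t tn q_len by simp
    next
      case 2
      have "emb k \<le> n" using emb_le 2 by simp
      thus ?thesis using 2 blue_lift q_len by simp
    qed
  qed
qed

lemma q_num_blue: "num_blue q = Suc (num_blue p)"
proof -
  have inj: "inj emb" unfolding inj_def by (metis emb_mono linorder_neqE_nat less_irrefl)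
  have "t \<notin> emb ` {k. k < n \<and> blue_pos p k}"
  proof
    assume "t \<in> emb ` {k. k < n \<and> blue_pos p k}"
    then obtain k where "t = emb k" by auto
    thus False using emb_ne[of k] by simp
  qed
  hence "card (insert t (emb ` {k. k < n \<and> blue_pos p k})) = Suc (card (emb ` {k. k < n \<and> blue_pos p k}))"
    by simp
  also have "card (emb ` {k. k < n \<and> blue_pos p k}) = card {k. k < n \<and> blue_pos p k}"
    using card_image inj inj_on_subset by blast
  finally show ?thesis unfolding num_blue_def blue_set by simp
qed

end


context av begin
lemma good_unique: assumes "good y t" "good y t'" shows "t = t'"
proof (cases "c321 \<and> a < y \<and> y \<le> b")
  case True thus ?thesis using assms unfolding good_def by auto
next
  case False
  have g: "t < n" "nonlr p t" "p!t < y" "\<And>k. t < k \<Longrightarrow> k < n \<Longrightarrow> nonlr p k \<Longrightarrow> y \<le> p!k"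
       "t' < n" "nonlr p t'" "p!t' < y" "\<And>k. t' < k \<Longrightarrow> k < n \<Longrightarrow> nonlr p k \<Longrightarrow> y \<le> p!k"
    using assms False unfolding good_def by auto
  show ?thesis
  proof (rule ccontr)
    assume "t \<noteq> t'"
    hence "t < t' \<or> t' < t" by auto
    thus False
    proof
      assume "t < t'" thus False using g(4)[of t'] g(5,6,7) by simp
    next
      assume "t' < t" thus False using g(8)[of t] g(1,2,3) by simp
    qed
  qed
qed
end

theorem proposition8:
  fixes p :: "nat list"
  assumes "avoider p"
  shows "(\<forall>y \<in> peak_set p. \<exists>!i. i \<in> {1..length p + 1} \<and>
            avoider (ins p i y) \<and> contains (ins p i y) [3,2,1] \<and>
            peak_blue (ins p i y) = y \<and> num_blue (ins p i y) = num_blue p + 1) \<and>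
         (\<forall>y \<in> {1..length p + 1} - peak_set p. \<not> (\<exists>i \<in> {1..length p + 1}.
            avoider (ins p i y) \<and> contains (ins p i y) [3,2,1] \<and>
            peak_blue (ins p i y) = y \<and> num_blue (ins p i y) = num_blue p + 1))"
proof -
  interpret av p using assms by unfold_locales
  have nec: "\<And>y i. y \<in> {1..length p + 1} \<Longrightarrow> i \<in> {1..length p + 1} \<Longrightarrow>
            avoider (ins p i y) \<Longrightarrow> contains (ins p i y) [3,2,1] \<Longrightarrow> peak_blue (ins p i y) = y \<Longrightarrow>
            y \<in> peak_set p \<and> good y (i - 1)"
  proof -
    fix y i assume y: "y \<in> {1..length p + 1}" and i: "i \<in> {1..length p + 1}"
      and h: "avoider (ins p i y)" "contains (ins p i y) [3,2,1]" "peak_blue (ins p i y) = y"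
    interpret Q: avq p y "i - 1" using assms y i by unfold_locales auto
    have qe: "Q.q = ins p i y" unfolding Q.q_def using i by simp
    show "y \<in> peak_set p \<and> good y (i - 1)"
      using Q.necessity h unfolding qe avoider_def by blast
  qed
  have part1: "\<forall>y \<in> peak_set p. \<exists>!i. i \<in> {1..length p + 1} \<and>
            avoider (ins p i y) \<and> contains (ins p i y) [3,2,1] \<and>
            peak_blue (ins p i y) = y \<and> num_blue (ins p i y) = num_blue p + 1"
  proof
    fix y assume yS: "y \<in> peak_set p"
    have yr: "2 \<le> y" "y \<le> n" using yS_range[OF yS] by auto
    obtain t where t: "t \<le> n" "good y t" using exists_good[OF yS] by blast
    interpret G: avg p y t using assms yr t yS by unfold_locales auto
    have qe: "G.q = ins p (Suc t) y" unfolding G.q_def by simp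
    show "\<exists>!i. i \<in> {1..length p + 1} \<and>
            avoider (ins p i y) \<and> contains (ins p i y) [3,2,1] \<and>
            peak_blue (ins p i y) = y \<and> num_blue (ins p i y) = num_blue p + 1"
    proof (rule ex1I[of _ "Suc t"])
      show "Suc t \<in> {1..length p + 1} \<and>
            avoider (ins p (Suc t) y) \<and> contains (ins p (Suc t) y) [3,2,1] \<and>
            peak_blue (ins p (Suc t) y) = y \<and> num_blue (ins p (Suc t) y) = num_blue p + 1"
        using G.q_avoider G.q_c321 G.q_peak G.q_num_blue t(1) unfolding qe by simp
    next
      fix i assume H: "i \<in> {1..length p + 1} \<and>
            avoider (ins p i y) \<and> contains (ins p i y) [3,2,1] \<and>
            peak_blue (ins p i y) = y \<and> num_blue (ins p i y) = num_blue p + 1"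
      have "y \<in> {1..length p + 1}" using yr by simp
      hence "good y (i - 1)" using nec[of y i] H by blast
      hence "i - 1 = t" using good_unique[OF _ t(2)] by blast
      thus "i = Suc t" using H by auto
    qed
  qed
  have part2: "\<forall>y \<in> {1..length p + 1} - peak_set p. \<not> (\<exists>i \<in> {1..length p + 1}.
            avoider (ins p i y) \<and> contains (ins p i y) [3,2,1] \<and>
            peak_blue (ins p i y) = y \<and> num_blue (ins p i y) = num_blue p + 1)"
    using nec by blast
  show ?thesis using part1 part2 by blast
qed


end
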